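(* Let $N\ge2$, let $G$ be a connected undirected graph with $N$ vertices, and let $L$ be its Laplacian. For $0<\gamma\le\lambda_2(L)$ define \[ \Gamma_\infty(\gamma):=\sup_{t\ge0}\|e^{\gamma t}(e^{-Lt}-\mathbf{1}\bar{\mathbf{1}})\|_\infty. \] Then: (a) for all $0<\gamma\le\lambda_2(L)$, $2-\frac2N\le\Gamma_\infty(\gamma)\le N-1$; (b) if $G$ is a complete graph, then $\lambda_2(L)=N$ and $\Gamma_\infty(\gamma)=2-\frac2N$ for all $0<\gamma\le N$.
   Context: $\mathbf{1}=(1,\dots,1)^\top\in\mathbb{R}^N$, $\bar{\mathbf{1}}=\frac1N\mathbf{1}^\top$; $\|\cdot\|_\infty$ is the matrix norm induced by the maximum norm (maximum absolute row sum); $\lambda_2(L)$ is the second smallest eigenvalue of $L$. *)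

theory Defs
  imports "HOL-Analysis.Analysis" "HOL-Computational_Algebra.Polynomial"
begin

definition undirected_graph :: "('n \<Rightarrow> 'n \<Rightarrow> bool) \<Rightarrow> bool" where
  "undirected_graph E \<longleftrightarrow> (\<forall>i j. E i j \<longrightarrow> E j i) \<and> (\<forall>i. \<not> E i i)"

definition graph_connected :: "('n \<Rightarrow> 'n \<Rightarrow> bool) \<Rightarrow> bool" where
  "graph_connected E \<longleftrightarrow> (\<forall>i j. E\<^sup>*\<^sup>* i j)"

definition complete_graph :: "('n \<Rightarrow> 'n \<Rightarrow> bool) \<Rightarrow> bool" where
  "complete_graph E \<longleftrightarrow> (\<forall>i j. i \<noteq> j \<longrightarrow> E i j)"

definition laplacian :: "('n::finite \<Rightarrow> 'n \<Rightarrow> bool) \<Rightarrow> real^'n^'n" where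
  "laplacian E = (\<chi> i j. if i = j then real (card {k. E i k}) else if E i j then -1 else 0)"

fun mat_pow :: "real^'n::finite^'n \<Rightarrow> nat \<Rightarrow> real^'n^'n" where
  "mat_pow A 0 = mat 1"
| "mat_pow A (Suc k) = A ** mat_pow A k"

definition mat_exp :: "real^'n::finite^'n \<Rightarrow> real^'n^'n" where
  "mat_exp A = (\<Sum>k. (1 / fact k) *\<^sub>R mat_pow A k)"

(* the matrix 1 * (1/N) 1^T *)
definition avg_mat :: "real^'n::finite^'n" where
  "avg_mat = (\<chi> i j. 1 / real CARD('n))"

(* matrix norm induced by the maximum norm: maximum absolute row sum *)
definition inf_norm :: "real^'n::finite^'n \<Rightarrow> real" where
  "inf_norm A = Max (range (\<lambda>i. \<Sum>j\<in>UNIV. \<bar>A $ i $ j\<bar>))"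

definition charpoly :: "real^'n::finite^'n \<Rightarrow> real poly" where
  "charpoly A = det (\<chi> i j. (if i = j then [:0, 1:] else 0) - [: A $ i $ j :])"

(* eigenvalues with algebraic multiplicity, sorted increasingly; lambda_2 = second smallest *)
definition lambda2 :: "real^'n::finite^'n \<Rightarrow> real" where
  "lambda2 A = sorted_list_of_multiset (proots (charpoly A)) ! 1"

definition Gamma_inf :: "real^'n::finite^'n \<Rightarrow> real \<Rightarrow> real" where
  "Gamma_inf L \<gamma> = Sup {inf_norm (exp (\<gamma> * t) *\<^sub>R (mat_exp (- (t *\<^sub>R L)) - avg_mat)) | t. t \<ge> 0}"

end

theory Submission
  imports Defs
begin


lemma sym_inner:
  fixes A :: "real^'n::finite^'n"
  assumes sym: "\<And>i j. A$i$j = A$j$i"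
  shows "(A *v x) \<bullet> y = x \<bullet> (A *v y)"
proof -
  have "(A *v x) \<bullet> y = (\<Sum>i\<in>UNIV. \<Sum>j\<in>UNIV. A$i$j * x$j * y$i)"
    by (simp add: inner_vec_def matrix_vector_mult_def sum_distrib_right)
  also have "\<dots> = (\<Sum>j\<in>UNIV. \<Sum>i\<in>UNIV. A$i$j * x$j * y$i)" by (rule sum.swap)
  also have "\<dots> = x \<bullet> (A *v y)"
    by (simp add: inner_vec_def matrix_vector_mult_def sum_distrib_left sym mult_ac)
  finally show ?thesis .
qed

lemma quad_zero:
  fixes a c :: real
  assumes "a \<ge> 0" "\<And>s. 2 * s * a + s^2 * c \<le> 0"
  shows "a = 0"
proof (rule ccontr)
  assume "a \<noteq> 0" hence a: "a > 0" using assms by simp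
  define s where "s = a / (\<bar>c\<bar> + 1)"
  have d: "\<bar>c\<bar> + 1 > 0" by simp
  have sp: "s > 0" using a d by (simp add: s_def)
  have "s * \<bar>c\<bar> \<le> a" using a d by (simp add: s_def field_simps)
  moreover have "- (s * \<bar>c\<bar>) \<le> s * c" using sp mult_left_mono[OF abs_ge_minus_self[of c], of s] by simp
  ultimately have "2 * a + s * c > 0" using a by linarith
  hence "s * (2 * a + s * c) > 0" using sp by simp
  moreover have "2 * s * a + s^2 * c = s * (2 * a + s * c)" by (simp add: algebra_simps power2_eq_square)
  ultimately show False using assms(2)[of s] by simp
qed

lemma spectral_step:
  fixes A :: "real^'n::finite^'n"
  assumes sym: "\<And>i j. A$i$j = A$j$i"
    and W: "W = {x. \<forall>k\<in>S. x \<bullet> b k = 0}"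
    and eig: "\<forall>k\<in>S. A *v b k = \<mu> k *\<^sub>R b k"
    and ne: "\<exists>x\<in>W. x \<noteq> 0"
  shows "\<exists>u\<in>W. norm u = 1 \<and> A *v u = (u \<bullet> (A *v u)) *\<^sub>R u"
proof -
  define Q where "Q x = x \<bullet> (A *v x)" for x
  define K where "K = W \<inter> sphere 0 1"
  have "W = (\<Inter>k\<in>S. {x. b k \<bullet> x = 0})" unfolding W by (auto simp: inner_commute)
  hence clW: "closed W" by (auto intro!: closed_INT closed_hyperplane)
  have "compact K" unfolding K_def by (intro closed_Int_compact clW) auto
  moreover have "K \<noteq> {}"
  proof -
    obtain x where "x \<in> W" "x \<noteq> 0" using ne by auto
    hence "x /\<^sub>R norm x \<in> K" unfolding K_def W by (auto simp: inner_commute)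
    thus ?thesis by auto
  qed
  moreover have "continuous_on K Q" unfolding Q_def
    by (intro continuous_on_inner continuous_on_id matrix_vector_mult_linear_continuous_on)
  ultimately have "\<exists>u\<in>K. \<forall>y\<in>K. Q y \<le> Q u" by (rule continuous_attains_sup)
  then obtain u where uK: "u \<in> K" and umax: "\<And>y. y \<in> K \<Longrightarrow> Q y \<le> Q u"
    by auto
  have uW: "u \<in> W" and nu: "norm u = 1" using uK by (auto simp: K_def)
  have uu: "u \<bullet> u = 1" using nu by (simp add: norm_eq_1)
  have Wadd: "x + y \<in> W" if "x \<in> W" "y \<in> W" for x y
    using that unfolding W by (auto simp: inner_add_left)
  have Wscale: "c *\<^sub>R x \<in> W" if "x \<in> W" for x c
    using that unfolding W by auto
  have Winv: "A *v x \<in> W" if "x \<in> W" for x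
    using that eig unfolding W by (auto simp: sym_inner[OF sym])
  define w where "w = A *v u - Q u *\<^sub>R u"
  have wW: "w \<in> W"
  proof -
    have "A *v u + (- Q u) *\<^sub>R u \<in> W" by (intro Wadd Wscale Winv uW)
    thus ?thesis unfolding w_def by simp
  qed
  have wu: "w \<bullet> u = 0" unfolding w_def Q_def using uu
    by (simp add: inner_diff_left inner_commute[of "A *v u" u])
  have "A *v u = w + Q u *\<^sub>R u" unfolding w_def by simp
  hence wAu: "w \<bullet> (A *v u) = w \<bullet> w"
    by (simp add: inner_add_right wu inner_commute[of w u])
  have key: "2 * s * (w \<bullet> w) + s^2 * (Q w - Q u * (w \<bullet> w)) \<le> 0" for s
  proof -
    define y where "y = u + s *\<^sub>R w"
    have yy: "y \<bullet> y = 1 + s^2 * (w \<bullet> w)"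
      unfolding y_def using uu wu by (simp add: inner_add_left inner_add_right inner_commute power2_eq_square)
    have ypos: "y \<bullet> y > 0" unfolding yy by (simp add: add_pos_nonneg)
    hence ny: "norm y > 0" by (simp add: inner_gt_zero_iff)
    have yW: "y \<in> W" unfolding y_def by (intro Wadd Wscale uW wW)
    have "y /\<^sub>R norm y \<in> K" unfolding K_def using ny Wscale[OF yW] by auto
    hence "Q (y /\<^sub>R norm y) \<le> Q u" by (rule umax)
    moreover have "Q (y /\<^sub>R norm y) = Q y / (y \<bullet> y)"
    proof -
      have "Q (y /\<^sub>R norm y) = Q y / (norm y * norm y)"
        unfolding Q_def by (simp add: matrix_vector_mult_scaleR divide_inverse)
      also have "norm y * norm y = y \<bullet> y" by (simp add: norm_eq_sqrt_inner)
      finally show ?thesis .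
    qed
    ultimately have "Q y \<le> Q u * (y \<bullet> y)" using ypos by (simp add: divide_le_eq)
    moreover have "Q y = Q u + 2 * s * (w \<bullet> w) + s^2 * Q w"
    proof -
      have "Q y = (u + s *\<^sub>R w) \<bullet> (A *v u + s *\<^sub>R (A *v w))"
        unfolding y_def Q_def by (simp add: matrix_vector_right_distrib matrix_vector_mult_scaleR)
      also have "\<dots> = u \<bullet> (A *v u) + s * (u \<bullet> (A *v w)) + s * (w \<bullet> (A *v u)) + s * s * (w \<bullet> (A *v w))"
        by (simp add: inner_add_left inner_add_right algebra_simps)
      also have "u \<bullet> (A *v w) = w \<bullet> (A *v u)"
        using sym_inner[OF sym, of w u] by (simp add: inner_commute)
      finally show ?thesis using wAu by (simp add: Q_def power2_eq_square algebra_simps)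
    qed
    ultimately show ?thesis unfolding yy by (simp add: algebra_simps power2_eq_square)
  qed
  have "w \<bullet> w = 0" by (rule quad_zero[OF _ key]) simp
  hence "w = 0" by simp
  thus ?thesis using uW nu unfolding w_def Q_def by auto
qed

lemma spectral:
  fixes A :: "real^'n::finite^'n"
  assumes sym: "\<And>i j. A$i$j = A$j$i"
  obtains b :: "'n \<Rightarrow> real^'n" and \<mu> :: "'n \<Rightarrow> real" where "\<And>k l. b k \<bullet> b l = (if k = l then 1 else 0)" "\<And>k. A *v b k = \<mu> k *\<^sub>R b k"
proof -
  have "\<exists>b \<mu>. (\<forall>k\<in>S. \<forall>l\<in>S. b k \<bullet> b l = (if k = l then 1 else (0::real))) \<and> (\<forall>k\<in>S. A *v b k = \<mu> k *\<^sub>R b k)"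
    for S :: "'n set"
    using finite[of S]
  proof (induction S rule: finite_induct)
    case empty
    then show ?case by auto
  next
    case (insert a S)
    then obtain b \<mu> where bo: "\<forall>k\<in>S. \<forall>l\<in>S. b k \<bullet> b l = (if k = l then 1 else (0::real))"
      and be: "\<forall>k\<in>S. A *v b k = \<mu> k *\<^sub>R b k" by blast
    define W where "W = {x. \<forall>k\<in>S. x \<bullet> b k = 0}"
    have "card (insert a S) \<le> CARD('n)" by (rule card_mono) auto
    hence cS: "card S < CARD('n)" using insert by simp
    have "dim (b ` S) \<le> card (b ` S)" by (rule dim_le_card') simp
    also have "\<dots> \<le> card S" by (rule card_image_le) simp
    finally have "dim (b ` S) < DIM(real^'n)" using cS by simp
    then obtain x where x0: "x \<noteq> 0" and xo: "\<And>y. y \<in> span (b ` S) \<Longrightarrow> orthogonal x y"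
      by (rule orthogonal_to_subspace_exists) auto
    have "x \<in> W" unfolding W_def using xo by (auto simp: orthogonal_def span_base)
    with x0 have ne: "\<exists>x\<in>W. x \<noteq> 0" by auto
    obtain u where uW: "u \<in> W" and nu: "norm u = 1" and ue: "A *v u = (u \<bullet> (A *v u)) *\<^sub>R u"
      using spectral_step[OF sym W_def be ne] by auto
    have uu: "u \<bullet> u = 1" using nu by (simp add: norm_eq_1)
    define b' where "b' = b(a := u)"
    define \<mu>' where "\<mu>' = \<mu>(a := u \<bullet> (A *v u))"
    have "\<forall>k\<in>insert a S. \<forall>l\<in>insert a S. b' k \<bullet> b' l = (if k = l then 1 else (0::real))"
      using bo uW uu insert(2) unfolding b'_def W_def by (auto simp: inner_commute)
    moreover have "\<forall>k\<in>insert a S. A *v b' k = \<mu>' k *\<^sub>R b' k"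
      using be ue insert(2) unfolding b'_def \<mu>'_def by auto
    ultimately show ?case by blast
  qed
  from this[of UNIV] obtain b :: "'n \<Rightarrow> real^'n" and \<mu> where
    "\<forall>k\<in>UNIV. \<forall>l\<in>UNIV. b k \<bullet> b l = (if k = l then 1 else (0::real))"
    "\<forall>k\<in>UNIV. A *v b k = \<mu> k *\<^sub>R b k" by auto
  hence "b k \<bullet> b l = (if k = l then 1 else 0)" "A *v b k = \<mu> k *\<^sub>R b k" for k l by auto
  thus ?thesis by (rule that)
qed




lemma poly_det: "poly (det M) x = det (\<chi> i j. poly (M $ i $ j) x)"
  unfolding det_def by (simp add: poly_sum poly_prod)

locale ortho_eig =
  fixes A :: "real^'n::finite^'n" and b :: "'n \<Rightarrow> real^'n" and \<mu> :: "'n \<Rightarrow> real"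
  assumes orth: "\<And>k l. b k \<bullet> b l = (if k = l then 1 else 0)"
    and eig: "\<And>k. A *v b k = \<mu> k *\<^sub>R b k"
begin

definition P :: "'n \<Rightarrow> real^'n^'n" where "P k = (\<chi> i j. b k $ i * b k $ j)"
definition F :: "('n \<Rightarrow> real) \<Rightarrow> real^'n^'n" where "F c = (\<Sum>k\<in>UNIV. c k *\<^sub>R P k)"

lemma orth_sum: "(\<Sum>i\<in>UNIV. b k $ i * b l $ i) = (if k = l then 1 else 0)"
  using orth[of k l] by (simp add: inner_vec_def)

lemma comp: "(\<Sum>k\<in>UNIV. b k $ i * b k $ j) = (if i = j then 1 else 0)"
proof -
  define U :: "real^'n^'n" where "U = (\<chi> i k. b k $ i)"
  have "transpose U ** U = mat 1"
    by (simp add: vec_eq_iff matrix_matrix_mult_def transpose_def U_def orth_sum mat_def)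
  hence "U ** transpose U = mat 1" using matrix_left_right_inverse by blast
  hence "(U ** transpose U) $ i $ j = mat 1 $ i $ j" by simp
  thus ?thesis by (simp add: matrix_matrix_mult_def transpose_def U_def mat_def)
qed

lemma F_entry: "F c $ i $ j = (\<Sum>k\<in>UNIV. c k * b k $ i * b k $ j)"
  by (simp add: F_def P_def sum_component mult_ac)

lemma F_eqI: "(\<And>i j. M $ i $ j = (\<Sum>k\<in>UNIV. c k * b k $ i * b k $ j)) \<Longrightarrow> M = F c"
  by (simp add: vec_eq_iff F_entry)

lemma F_mult: "F c ** F d = F (\<lambda>k. c k * d k)"
proof (rule F_eqI)
  fix i j
  have "(F c ** F d) $ i $ j = (\<Sum>l\<in>UNIV. (\<Sum>k\<in>UNIV. c k * b k $ i * b k $ l) * (\<Sum>m\<in>UNIV. d m * b m $ l * b m $ j))"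
    by (simp add: matrix_matrix_mult_def F_entry)
  also have "\<dots> = (\<Sum>l\<in>UNIV. \<Sum>k\<in>UNIV. \<Sum>m\<in>UNIV. (c k * b k $ i) * (d m * b m $ j) * (b k $ l * b m $ l))"
    unfolding sum_product by (intro sum.cong refl) (simp add: mult_ac)
  also have "\<dots> = (\<Sum>k\<in>UNIV. \<Sum>m\<in>UNIV. \<Sum>l\<in>UNIV. (c k * b k $ i) * (d m * b m $ j) * (b k $ l * b m $ l))"
    by (subst sum.swap) (rule sum.cong[OF refl], rule sum.swap)
  also have "\<dots> = (\<Sum>k\<in>UNIV. \<Sum>m\<in>UNIV. (c k * b k $ i) * (d m * b m $ j) * (if k = m then 1 else 0))"
    by (simp add: sum_distrib_left[symmetric] orth_sum)
  also have "\<dots> = (\<Sum>k\<in>UNIV. c k * d k * b k $ i * b k $ j)"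
    by (simp add: mult_ac if_distrib cong: if_cong)
  finally show "(F c ** F d) $ i $ j = (\<Sum>k\<in>UNIV. c k * d k * b k $ i * b k $ j)" .
qed

lemma F_one: "F (\<lambda>k. 1) = mat 1"
  by (rule F_eqI[symmetric]) (simp add: comp mat_def)

lemma A_eq: "A = F \<mu>"
proof (rule F_eqI)
  fix i j
  have "A $ i $ j = (\<Sum>l\<in>UNIV. A $ i $ l * (\<Sum>k\<in>UNIV. b k $ l * b k $ j))"
    by (simp add: comp if_distrib cong: if_cong)
  also have "\<dots> = (\<Sum>k\<in>UNIV. (\<Sum>l\<in>UNIV. A $ i $ l * b k $ l) * b k $ j)"
    by (simp add: sum_distrib_left sum_distrib_right mult_ac) (rule sum.swap)
  also have "\<dots> = (\<Sum>k\<in>UNIV. (A *v b k) $ i * b k $ j)"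
    by (simp add: matrix_vector_mult_def)
  also have "\<dots> = (\<Sum>k\<in>UNIV. \<mu> k * b k $ i * b k $ j)" by (simp add: eig)
  finally show "A $ i $ j = \<dots>" .
qed

lemma F_scale: "a *\<^sub>R F c = F (\<lambda>k. a * c k)"
  by (rule F_eqI) (simp add: F_entry sum_distrib_left mult_ac)

lemma F_diff: "F c - F d = F (\<lambda>k. c k - d k)"
  by (rule F_eqI) (simp add: F_entry sum_subtractf[symmetric] algebra_simps)

lemma F_uminus: "- F c = F (\<lambda>k. - c k)"
  by (rule F_eqI) (simp add: F_entry sum_negf[symmetric])

lemma F_pow: "mat_pow (F c) m = F (\<lambda>k. c k ^ m)"
  by (induction m) (simp_all add: F_one F_mult)

lemma F_exp: "mat_exp (F c) = F (\<lambda>k. exp (c k))"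
proof -
  have sk: "summable (\<lambda>m. c k ^ m / fact m)" for k
  proof -
    have "summable (\<lambda>m. c k ^ m /\<^sub>R fact m)" by (rule summable_exp_generic)
    thus ?thesis by (simp add: divide_inverse mult.commute)
  qed
  have "mat_exp (F c) = (\<Sum>m. (1 / fact m) *\<^sub>R F (\<lambda>k. c k ^ m))"
    unfolding mat_exp_def F_pow ..
  also have "\<dots> = (\<Sum>m. \<Sum>k\<in>UNIV. (c k ^ m / fact m) *\<^sub>R P k)"
    unfolding F_def by (simp add: scaleR_sum_right)
  also have "\<dots> = (\<Sum>k\<in>UNIV. \<Sum>m. (c k ^ m / fact m) *\<^sub>R P k)"
    by (rule suminf_sum) (rule summable_scaleR_left[OF sk])
  also have "\<dots> = (\<Sum>k\<in>UNIV. exp (c k) *\<^sub>R P k)"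
  proof (intro sum.cong refl)
    fix k
    have "(\<Sum>m. (c k ^ m / fact m) *\<^sub>R P k) = (\<Sum>m. c k ^ m / fact m) *\<^sub>R P k"
      by (rule suminf_scaleR_left[OF sk, symmetric])
    also have "(\<Sum>m. c k ^ m / fact m) = exp (c k)" by (simp add: exp_def divide_inverse mult.commute)
    finally show "(\<Sum>m. (c k ^ m / fact m) *\<^sub>R P k) = exp (c k) *\<^sub>R P k" .
  qed
  finally show ?thesis by (simp add: F_def)
qed

definition U :: "real^'n^'n" where "U = (\<chi> i k. b k $ i)"

lemma U_Ut: "U ** transpose U = mat 1"
  by (simp add: vec_eq_iff matrix_matrix_mult_def transpose_def U_def comp mat_def)

lemma F_decomp: "F c = U ** (\<chi> i j. if i = j then c i else 0) ** transpose U"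
  by (rule F_eqI[symmetric]) (simp add: matrix_matrix_mult_def U_def transpose_def
      if_distrib sum_distrib_right mult_ac cong: if_cong)

lemma det_F: "det (F c) = (\<Prod>k\<in>UNIV. c k)"
proof -
  have "det (F c) = det U * det (\<chi> i j. if i = j then c i else 0) * det (transpose U)"
    unfolding F_decomp det_mul ..
  also have "\<dots> = det (U ** transpose U) * det (\<chi> i j. if i = j then c i else 0)"
    by (simp add: det_mul)
  also have "\<dots> = (\<Prod>k\<in>UNIV. c k)" by (subst det_diagonal) (auto simp: U_Ut)
  finally show ?thesis .
qed

lemma charpoly_eq: "charpoly A = (\<Prod>k\<in>UNIV. [:- \<mu> k, 1:])"
proof -
  have "poly (charpoly A) x = poly (\<Prod>k\<in>UNIV. [:- \<mu> k, 1:]) x" for x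
  proof -
    have "(\<chi> i j. poly ((if i = j then [:0, 1:] else 0) - [: A $ i $ j :]) x) = x *\<^sub>R F (\<lambda>k. 1) - F \<mu>"
      by (simp add: F_one A_eq[symmetric] vec_eq_iff mat_def)
    also have "\<dots> = F (\<lambda>k. x - \<mu> k)" by (simp add: F_scale F_diff)
    finally have "poly (charpoly A) x = det (F (\<lambda>k. x - \<mu> k))"
      unfolding charpoly_def poly_det by simp
    thus ?thesis by (simp add: det_F poly_prod)
  qed
  thus ?thesis by (simp add: poly_eq_poly_eq_iff[symmetric] fun_eq_iff)
qed

lemma proots_charpoly: "proots (charpoly A) = image_mset \<mu> (mset_set UNIV)"
proof -
  have "proots (charpoly A) = (\<Sum>k\<in>UNIV. {# \<mu> k #})"
    unfolding charpoly_eq by (subst proots_prod) auto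
  also have "\<dots> = image_mset \<mu> (mset_set UNIV)"
    by (induction rule: finite_induct[OF finite[of UNIV]]) auto
  finally show ?thesis .
qed

end



lemma lap_sym:
  assumes "undirected_graph E"
  shows "laplacian E $ i $ j = laplacian E $ j $ i"
  using assms unfolding undirected_graph_def laplacian_def by auto

lemma lap_mv:
  assumes "undirected_graph E"
  shows "(laplacian E *v x) $ i = (\<Sum>j\<in>UNIV. if E i j then x$i - x$j else 0)"
proof -
  have noloop: "\<not> E i i" using assms unfolding undirected_graph_def by auto
  have "(laplacian E *v x) $ i = (\<Sum>j\<in>UNIV. (if j = i then real (card {k. E i k}) * x$i else 0) - (if E i j then x$j else 0))"
    unfolding matrix_vector_mult_def laplacian_def using noloop
    by (simp only: vec_lambda_beta) (rule sum.cong, auto)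
  also have "\<dots> = real (card {k. E i k}) * x$i - (\<Sum>j\<in>UNIV. if E i j then x$j else 0)"
    by (simp add: sum_subtractf)
  also have "\<dots> = (\<Sum>j\<in>UNIV. if E i j then x$i - x$j else 0)"
    by (simp add: sum.If_cases sum_subtractf)
  finally show ?thesis .
qed

lemma lap_quad:
  assumes "undirected_graph E"
  shows "x \<bullet> (laplacian E *v x) = (\<Sum>i\<in>UNIV. \<Sum>j\<in>UNIV. if E i j then (x$i - x$j)^2 else 0) / 2"
proof -
  have sym: "E i j \<longleftrightarrow> E j i" for i j using assms unfolding undirected_graph_def by auto
  define S where "S = (\<Sum>i\<in>UNIV. \<Sum>j\<in>UNIV. if E i j then x$i * (x$i - x$j) else 0)"
  have 1: "x \<bullet> (laplacian E *v x) = S"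
    unfolding S_def inner_vec_def lap_mv[OF assms]
    by (simp add: sum_distrib_left if_distrib cong: if_cong)
  have "S = (\<Sum>j\<in>UNIV. \<Sum>i\<in>UNIV. if E i j then x$i * (x$i - x$j) else 0)"
    unfolding S_def by (rule sum.swap)
  also have "\<dots> = (\<Sum>i\<in>UNIV. \<Sum>j\<in>UNIV. if E i j then x$j * (x$j - x$i) else 0)"
    using sym by simp
  finally have 2: "S = \<dots>" .
  have "2 * S = (\<Sum>i\<in>UNIV. \<Sum>j\<in>UNIV. if E i j then (x$i - x$j)^2 else 0)"
    by (subst mult_2, subst (2) 2, unfold S_def sum.distrib[symmetric])
       (intro sum.cong refl, auto simp: power2_eq_square algebra_simps)
  thus ?thesis using 1 by simp
qed

lemma lap_quad_nonneg:
  assumes "undirected_graph E"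
  shows "x \<bullet> (laplacian E *v x) \<ge> 0"
  unfolding lap_quad[OF assms] by (intro divide_nonneg_pos sum_nonneg) auto

lemma lap_kernel_const:
  assumes "undirected_graph E" "graph_connected E" "x \<bullet> (laplacian E *v x) = 0"
  shows "x $ i = x $ j"
proof -
  have "(\<Sum>i\<in>UNIV. \<Sum>j\<in>UNIV. if E i j then (x$i - x$j)^2 else 0) = 0"
    using assms(3) unfolding lap_quad[OF assms(1)] by simp
  hence "\<forall>i\<in>UNIV. (\<Sum>j\<in>UNIV. if E i j then (x$i - x$j)^2 else 0) = 0"
    by (subst (asm) sum_nonneg_eq_0_iff) (auto intro: sum_nonneg)
  hence "\<forall>i j. (if E i j then (x$i - x$j)^2 else 0) = 0"
    by (subst (asm) sum_nonneg_eq_0_iff) auto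
  hence edge: "E i j \<Longrightarrow> x$i = x$j" for i j
  proof -
    assume h: "\<forall>i j. (if E i j then (x$i - x$j)^2 else 0) = 0" "E i j"
    hence "(x$i - x$j)^2 = 0" by metis
    thus "x$i = x$j" by simp
  qed
  have "E\<^sup>*\<^sup>* i j" using assms(2) unfolding graph_connected_def by auto
  thus ?thesis by (induction rule: rtranclp_induct) (auto dest: edge)
qed




context ortho_eig begin

lemma F_sym: "F c $ i $ j = F c $ j $ i"
  by (simp add: F_entry mult_ac)

lemma rowsq: "(\<Sum>j\<in>UNIV. (F c $ i $ j)^2) = (\<Sum>k\<in>UNIV. (c k)^2 * (b k $ i)^2)"
proof -
  have "(\<Sum>j\<in>UNIV. (F c $ i $ j)^2) = (F c ** F c) $ i $ i"
    by (simp add: matrix_matrix_mult_def power2_eq_square F_sym[of c _ i])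
  also have "\<dots> = (\<Sum>k\<in>UNIV. (c k)^2 * (b k $ i)^2)"
    by (simp add: F_mult F_entry power2_eq_square mult_ac)
  finally show ?thesis .
qed

lemma expand: "x = (\<Sum>k\<in>UNIV. (x \<bullet> b k) *\<^sub>R b k)"
proof -
  have "x $ i = (\<Sum>k\<in>UNIV. (x \<bullet> b k) * b k $ i)" for i
  proof -
    have "(\<Sum>k\<in>UNIV. (x \<bullet> b k) * b k $ i) = (\<Sum>k\<in>UNIV. \<Sum>j\<in>UNIV. x $ j * (b k $ j * b k $ i))"
      by (simp add: inner_vec_def sum_distrib_right sum_distrib_left mult_ac)
    also have "\<dots> = (\<Sum>j\<in>UNIV. x $ j * (\<Sum>k\<in>UNIV. b k $ j * b k $ i))"
      by (subst sum.swap) (simp add: sum_distrib_left)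
    also have "\<dots> = x $ i" by (simp add: comp if_distrib cong: if_cong)
    finally show ?thesis by simp
  qed
  thus ?thesis by (simp add: vec_eq_iff sum_component)
qed

lemma b_nz: "b k \<noteq> 0"
  using orth[of k k] by auto

lemma rowsum_bound:
  assumes ck0: "c k0 = 0" and c1: "\<And>k. \<bar>c k\<bar> \<le> 1"
    and bk0: "\<And>i. (b k0 $ i)^2 = 1 / real CARD('n)" and N2: "CARD('n) \<ge> 2"
  shows "(\<Sum>j\<in>UNIV. \<bar>F c $ i $ j\<bar>) \<le> real CARD('n) - 1"
proof -
  define N where "N = real CARD('n)"
  have N2': "N \<ge> 2" using N2 unfolding N_def by simp
  have "(\<Sum>j\<in>UNIV. (F c $ i $ j)^2) = (\<Sum>k\<in>UNIV. (c k)^2 * (b k $ i)^2)" by (rule rowsq)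
  also have "\<dots> \<le> (\<Sum>k\<in>UNIV. (if k = k0 then 0 else (b k $ i)^2))"
  proof (rule sum_mono)
    fix k
    have "(c k)^2 \<le> 1" using c1[of k] by (simp add: abs_square_le_1)
    thus "(c k)^2 * (b k $ i)^2 \<le> (if k = k0 then 0 else (b k $ i)^2)"
      using ck0 by (auto intro: mult_left_le_one_le)
  qed
  also have "\<dots> = (\<Sum>k\<in>UNIV. (b k $ i)^2) - (b k0 $ i)^2"
    by (simp add: sum.If_cases Diff_eq[symmetric] sum_diff1)
  also have "(\<Sum>k\<in>UNIV. (b k $ i)^2) = 1" using comp[of i i] by (simp add: power2_eq_square)
  finally have sq: "(\<Sum>j\<in>UNIV. (F c $ i $ j)^2) \<le> 1 - 1 / N" using bk0 unfolding N_def by simp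
  have "(\<Sum>j\<in>UNIV. \<bar>F c $ i $ j\<bar> * 1)^2 \<le> (\<Sum>j\<in>UNIV. \<bar>F c $ i $ j\<bar>^2) * (\<Sum>j\<in>(UNIV::'n set). 1^2)"
    using Cauchy_Schwarz_ineq_sum[of "\<lambda>j. \<bar>F c $ i $ j\<bar>" "\<lambda>j. 1" UNIV] by simp
  also have "\<dots> = (\<Sum>j\<in>UNIV. (F c $ i $ j)^2) * N" unfolding N_def power2_abs by simp
  also have "\<dots> \<le> (1 - 1/N) * N" by (rule mult_right_mono[OF sq]) (simp add: N_def)
  also have "\<dots> = N - 1" using N2' by (simp add: field_simps)
  also have "\<dots> \<le> (N - 1)^2" using N2' by (simp add: power2_eq_square)
  finally have "(\<Sum>j\<in>UNIV. \<bar>F c $ i $ j\<bar> * 1)^2 \<le> (N - 1)^2" .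
  hence "(\<Sum>j\<in>UNIV. \<bar>F c $ i $ j\<bar>)^2 \<le> (N - 1)^2" by (simp only: mult_1_right)
  hence "(\<Sum>j\<in>UNIV. \<bar>F c $ i $ j\<bar>) \<le> N - 1"
    by (rule power2_le_imp_le) (use N2' in simp)
  thus ?thesis unfolding N_def .
qed

end



context ortho_eig begin
lemma P_F: "P k0 = F (\<lambda>k. if k = k0 then 1 else 0)"
  unfolding F_def by (subst sum.cong[OF refl, where h="\<lambda>k. if k = k0 then P k else 0"]) auto
end

lemma inf_norm_le:
  assumes "\<And>i. (\<Sum>j\<in>UNIV. \<bar>M $ i $ j\<bar>) \<le> B"
  shows "inf_norm M \<le> B"
  unfolding inf_norm_def using assms by (subst Max_le_iff) auto

lemma inf_norm_eq:
  assumes "\<And>i. (\<Sum>j\<in>UNIV. \<bar>M $ i $ j\<bar>) = B"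
  shows "inf_norm M = B"
proof -
  have "range (\<lambda>i. \<Sum>j\<in>UNIV. \<bar>M $ i $ j\<bar>) = {B}" using assms by auto
  thus ?thesis unfolding inf_norm_def by simp
qed

lemma inf_norm_Iavg:
  assumes e: "e \<ge> 0" and N2: "CARD('n::finite) \<ge> 2"
  shows "inf_norm (e *\<^sub>R (mat 1 - (avg_mat :: real^'n^'n))) = e * (2 - 2 / real CARD('n))"
proof (rule inf_norm_eq)
  fix i :: 'n
  define N where "N = real CARD('n)"
  have N2': "N \<ge> 2" using N2 unfolding N_def by simp
  have "(\<Sum>j\<in>UNIV. \<bar>(e *\<^sub>R (mat 1 - (avg_mat :: real^'n^'n))) $ i $ j\<bar>)
      = (\<Sum>j\<in>UNIV. e * (1/N) + (if j = i then e * (1 - 2/N) else 0))"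
  proof (intro sum.cong refl)
    fix j
    have "e * 1 \<le> e * N" using N2' e by (intro mult_left_mono) auto
    hence h: "e / N \<le> e" using N2' by (simp add: divide_le_eq)
    show "\<bar>(e *\<^sub>R (mat 1 - (avg_mat :: real^'n^'n))) $ i $ j\<bar> = e * (1/N) + (if j = i then e * (1 - 2/N) else 0)"
      using h e N2' by (auto simp: avg_mat_def mat_def N_def[symmetric] abs_mult algebra_simps)
  qed
  also have "\<dots> = N * (e * (1/N)) + e * (1 - 2/N)"
    by (simp add: sum.distrib N_def)
  also have "\<dots> = e * (2 - 2/N)" using N2' by (simp add: field_simps)
  finally show "(\<Sum>j\<in>UNIV. \<bar>(e *\<^sub>R (mat 1 - (avg_mat :: real^'n^'n))) $ i $ j\<bar>) = e * (2 - 2 / real CARD('n))"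
    unfolding N_def .
qed




theorem proposition2:
  fixes E :: "'n::finite \<Rightarrow> 'n \<Rightarrow> bool"
  assumes "CARD('n) \<ge> 2"
    and "undirected_graph E"
    and "graph_connected E"
  shows "(\<forall>\<gamma>. 0 < \<gamma> \<and> \<gamma> \<le> lambda2 (laplacian E) \<longrightarrow>
            bdd_above {inf_norm (exp (\<gamma> * t) *\<^sub>R (mat_exp (- (t *\<^sub>R laplacian E)) - avg_mat)) | t. t \<ge> 0}
          \<and> 2 - 2 / real CARD('n) \<le> Gamma_inf (laplacian E) \<gamma>
          \<and> Gamma_inf (laplacian E) \<gamma> \<le> real CARD('n) - 1)
       \<and> (complete_graph E \<longrightarrow>
            lambda2 (laplacian E) = real CARD('n)
          \<and> (\<forall>\<gamma>. 0 < \<gamma> \<and> \<gamma> \<le> real CARD('n) \<longrightarrow>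
                 Gamma_inf (laplacian E) \<gamma> = 2 - 2 / real CARD('n)))"
proof -
  note N2 = assms(1) and ug = assms(2) and con = assms(3)
  define L where "L = laplacian E"
  define N where "N = real CARD('n)"
  have N2': "N \<ge> 2" using N2 unfolding N_def by simp
  have symL: "L$i$j = L$j$i" for i j unfolding L_def by (rule lap_sym[OF ug])
  obtain b :: "'n \<Rightarrow> real^'n" and \<mu> where orth: "\<And>k l. b k \<bullet> b l = (if k = l then 1 else 0)"
    and eig: "\<And>k. L *v b k = \<mu> k *\<^sub>R b k"
    using spectral[OF symL] by blast
  interpret oe: ortho_eig L b \<mu> by unfold_locales (fact orth, fact eig)
  have mu_quad: "\<mu> k = b k \<bullet> (L *v b k)" for k using orth[of k k] by (simp add: eig)
  have mu_nonneg: "\<mu> k \<ge> 0" for k unfolding mu_quad L_def by (rule lap_quad_nonneg[OF ug])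
  have zero_const: "b k $ i = b k $ j" if "\<mu> k = 0" for k i j
    using lap_kernel_const[OF ug con, of "b k"] that mu_quad[of k] unfolding L_def by simp
  have sq_sum: "(\<Sum>j\<in>UNIV. b k $ j * b k $ j) = 1" for k using orth[of k k] by (simp add: inner_vec_def)
  have const_sq: "(b k $ i)^2 = 1 / N" if "\<mu> k = 0" for k i
  proof -
    have "1 = (\<Sum>j\<in>UNIV. b k $ j * b k $ j)" using sq_sum[of k] by simp
    also have "\<dots> = (\<Sum>j\<in>(UNIV::'n set). b k $ i * b k $ i)"
    proof (rule sum.cong[OF refl])
      fix j show "b k $ j * b k $ j = b k $ i * b k $ i" using zero_const[OF that, of j i] by simp
    qed
    also have "\<dots> = N * (b k $ i)^2" by (simp add: N_def power2_eq_square)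
    finally show ?thesis using N2' by (simp add: field_simps)
  qed
  define one :: "real^'n" where "one = (\<chi> i. 1)"
  have "(L *v one) $ i = 0" for i unfolding L_def lap_mv[OF ug] one_def by (simp cong: if_cong)
  hence Lone: "L *v one = 0" by (simp add: vec_eq_iff)
  obtain k0 where mu0: "\<mu> k0 = 0"
  proof (cases "\<exists>k. \<mu> k = 0")
    case True thus ?thesis using that by blast
  next
    case False
    have "one \<bullet> b k = 0" for k
    proof -
      have "\<mu> k * (one \<bullet> b k) = one \<bullet> (L *v b k)" by (simp add: eig)
      also have "\<dots> = (L *v one) \<bullet> b k" by (simp add: sym_inner[OF symL])
      finally show ?thesis using False Lone by simp
    qed
    hence "one = 0" by (subst oe.expand) simp
    hence False by (simp add: one_def vec_eq_iff)
    thus ?thesis ..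
  qed
  have uniq: "k = k0" if "\<mu> k = 0" for k
  proof (rule ccontr)
    assume ne: "k \<noteq> k0"
    obtain i0 :: 'n where True by simp
    have "0 = b k \<bullet> b k0" using orth[of k k0] ne by simp
    also have "\<dots> = (\<Sum>i\<in>(UNIV::'n set). b k $ i0 * b k0 $ i0)"
    proof -
      have h: "b k $ i * b k0 $ i = b k $ i0 * b k0 $ i0" for i
        using zero_const[OF \<open>\<mu> k = 0\<close>, of i i0] zero_const[OF mu0, of i i0] by simp
      show ?thesis unfolding inner_vec_def inner_real_def by (rule sum.cong[OF refl]) (rule h)
    qed
    also have "\<dots> = N * (b k $ i0 * b k0 $ i0)" by (simp add: N_def)
    finally have "b k $ i0 * b k0 $ i0 = 0" using N2' by simp
    moreover have "(b k $ i0)^2 \<noteq> 0" "(b k0 $ i0)^2 \<noteq> 0"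
      using const_sq[OF that, of i0] const_sq[OF mu0, of i0] N2' by auto
    ultimately show False by simp
  qed
  have mu_pos: "\<mu> k > 0" if "k \<noteq> k0" for k using mu_nonneg[of k] uniq[of k] that by force
  have Pavg: "oe.P k0 = avg_mat"
  proof -
    have "b k0 $ i * b k0 $ j = 1 / N" for i j
      using const_sq[OF mu0, of i] zero_const[OF mu0, of j i] by (simp add: power2_eq_square)
    thus ?thesis by (simp add: oe.P_def avg_mat_def vec_eq_iff N_def)
  qed
  define R where "R = image_mset \<mu> (mset_set (UNIV - {k0}))"
  define xs where "xs = sorted_list_of_multiset R"
  have "proots (charpoly L) = add_mset 0 R"
  proof -
    have "mset_set (UNIV :: 'n set) = add_mset k0 (mset_set (UNIV - {k0}))"
      using mset_set.insert_remove[of UNIV k0] by (simp add: insert_UNIV)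
    thus ?thesis unfolding oe.proots_charpoly R_def by (simp add: mu0)
  qed
  moreover have "sorted_list_of_multiset (add_mset 0 R) = 0 # xs"
    unfolding xs_def sorted_list_of_multiset_insert
    by (rule insort_is_Cons) (auto simp: R_def mu_nonneg)
  ultimately have lam: "lambda2 L = xs ! 0" unfolding lambda2_def by simp
  have setxs: "set xs = \<mu> ` (UNIV - {k0})" unfolding xs_def R_def by simp
  have xs_ne: "xs \<noteq> []"
  proof
    assume "xs = []"
    hence "UNIV - {k0} = {}" using setxs by simp
    hence "UNIV \<subseteq> {k0}" by blast
    hence "card (UNIV :: 'n set) \<le> card {k0}" by (rule card_mono[rotated]) simp
    hence "CARD('n) \<le> 1" by simp
    thus False using N2 by simp
  qed
  have lam_le: "lambda2 L \<le> \<mu> k" if "k \<noteq> k0" for k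
  proof -
    have "\<mu> k \<in> set xs" using setxs that by auto
    then obtain m where "m < length xs" "xs ! m = \<mu> k" by (auto simp: in_set_conv_nth)
    thus ?thesis unfolding lam using sorted_nth_mono[of xs 0 m] xs_def by simp
  qed
  define ind where "ind k = (if k = k0 then 1 else (0::real))" for k
  define cc where "cc \<gamma> t k = exp (\<gamma> * t) * (exp (- (t * \<mu> k)) - ind k)" for \<gamma> t k
  have avgF: "avg_mat = oe.F ind" unfolding Pavg[symmetric] oe.P_F[of k0] ind_def ..
  have Mform: "exp (\<gamma> * t) *\<^sub>R (mat_exp (- (t *\<^sub>R L)) - avg_mat) = oe.F (cc \<gamma> t)" for \<gamma> t
  proof -
    have "- (t *\<^sub>R L) = oe.F (\<lambda>k. - (t * \<mu> k))"
      by (subst oe.A_eq) (simp add: oe.F_scale oe.F_uminus)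
    hence h1: "mat_exp (- (t *\<^sub>R L)) = oe.F (\<lambda>k. exp (- (t * \<mu> k)))" by (simp add: oe.F_exp)
    have h2: "avg_mat = oe.F ind" by (rule avgF)
    have h3: "cc \<gamma> t = (\<lambda>k. exp (\<gamma> * t) * (exp (- (t * \<mu> k)) - ind k))"
      by (simp add: fun_eq_iff cc_def)
    show ?thesis unfolding h1 h2 h3 oe.F_diff oe.F_scale ..
  qed
  have cc0: "cc \<gamma> t k0 = 0" for \<gamma> t by (simp add: cc_def mu0 ind_def)
  have Gbound: "inf_norm (exp (\<gamma> * t) *\<^sub>R (mat_exp (- (t *\<^sub>R L)) - avg_mat)) \<le> N - 1"
    if "\<gamma> \<le> lambda2 L" "t \<ge> 0" for \<gamma> t
    unfolding Mform
  proof (rule inf_norm_le)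
    fix i
    have "\<bar>cc \<gamma> t k\<bar> \<le> 1" for k
    proof (cases "k = k0")
      case True thus ?thesis by (simp add: cc0)
    next
      case False
      have "\<gamma> * t \<le> \<mu> k * t" using that lam_le[OF False] by (intro mult_right_mono) auto
      hence "exp (\<gamma> * t - t * \<mu> k) \<le> 1" by (simp add: mult.commute)
      moreover have "cc \<gamma> t k = exp (\<gamma> * t - t * \<mu> k)"
        using False by (simp add: cc_def ind_def exp_diff exp_minus divide_inverse)
      ultimately show ?thesis by simp
    qed
    hence c1: "\<And>k. \<bar>cc \<gamma> t k\<bar> \<le> 1" .
    have bk0: "\<And>i. (b k0 $ i)^2 = 1 / real CARD('n)" using const_sq[OF mu0] unfolding N_def .
    show "(\<Sum>j\<in>UNIV. \<bar>oe.F (cc \<gamma> t) $ i $ j\<bar>) \<le> N - 1"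
      unfolding N_def by (rule oe.rowsum_bound[of "cc \<gamma> t" k0, OF cc0 c1 bk0 N2])
  qed
  have G0: "inf_norm (exp (\<gamma> * 0) *\<^sub>R (mat_exp (- (0 *\<^sub>R L)) - avg_mat)) = 2 - 2 / N" for \<gamma>
  proof -
    have "cc \<gamma> 0 = (\<lambda>k. 1 - ind k)" by (simp add: cc_def fun_eq_iff)
    hence "oe.F (cc \<gamma> 0) = 1 *\<^sub>R (mat 1 - avg_mat)"
      using oe.F_diff[of "\<lambda>k. 1" ind] by (simp add: oe.F_one Pavg[symmetric] oe.P_F[of k0] ind_def[abs_def])
    thus ?thesis unfolding Mform using inf_norm_Iavg[of 1, OF _ N2] by (simp add: N_def)
  qed
  define S where "S \<gamma> = {inf_norm (exp (\<gamma> * t) *\<^sub>R (mat_exp (- (t *\<^sub>R L)) - avg_mat)) | t. t \<ge> 0}" for \<gamma>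
  have G0S: "2 - 2 / N \<in> S \<gamma>" for \<gamma> unfolding S_def mem_Collect_eq
    by (rule exI[of _ 0], rule conjI[OF G0[symmetric]]) simp
  have partA: "bdd_above (S \<gamma>) \<and> 2 - 2 / N \<le> Sup (S \<gamma>) \<and> Sup (S \<gamma>) \<le> N - 1"
    if "\<gamma> \<le> lambda2 L" for \<gamma>
  proof -
    have ub: "x \<le> N - 1" if "x \<in> S \<gamma>" for x using that Gbound[OF \<open>\<gamma> \<le> lambda2 L\<close>] unfolding S_def by auto
    hence bdd: "bdd_above (S \<gamma>)" by (rule bdd_aboveI)
    moreover have "2 - 2 / N \<le> Sup (S \<gamma>)" by (rule cSup_upper[OF G0S bdd])
    moreover have "S \<gamma> \<noteq> {}" using G0S by auto
    hence "Sup (S \<gamma>) \<le> N - 1" using ub by (rule cSup_least)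
    ultimately show ?thesis by (intro conjI)
  qed
  have A: "\<forall>\<gamma>. 0 < \<gamma> \<and> \<gamma> \<le> lambda2 (laplacian E) \<longrightarrow>
            bdd_above {inf_norm (exp (\<gamma> * t) *\<^sub>R (mat_exp (- (t *\<^sub>R laplacian E)) - avg_mat)) | t. t \<ge> 0}
          \<and> 2 - 2 / real CARD('n) \<le> Gamma_inf (laplacian E) \<gamma>
          \<and> Gamma_inf (laplacian E) \<gamma> \<le> real CARD('n) - 1"
  proof (intro allI impI)
    fix \<gamma> :: real assume "0 < \<gamma> \<and> \<gamma> \<le> lambda2 (laplacian E)"
    hence "\<gamma> \<le> lambda2 L" by (simp add: L_def)
    from partA[OF this] show "bdd_above {inf_norm (exp (\<gamma> * t) *\<^sub>R (mat_exp (- (t *\<^sub>R laplacian E)) - avg_mat)) | t. t \<ge> 0}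
          \<and> 2 - 2 / real CARD('n) \<le> Gamma_inf (laplacian E) \<gamma>
          \<and> Gamma_inf (laplacian E) \<gamma> \<le> real CARD('n) - 1"
      unfolding S_def Gamma_inf_def L_def N_def by assumption
  qed
  have B: "lambda2 (laplacian E) = real CARD('n)
          \<and> (\<forall>\<gamma>. 0 < \<gamma> \<and> \<gamma> \<le> real CARD('n) \<longrightarrow>
                 Gamma_inf (laplacian E) \<gamma> = 2 - 2 / real CARD('n))" if cg: "complete_graph E"
  proof -
    have Ecomp: "E i j \<longleftrightarrow> i \<noteq> j" for i j
      using cg ug unfolding complete_graph_def undirected_graph_def by auto
    have Lx: "L *v x = N *\<^sub>R x - (\<Sum>j\<in>UNIV. x $ j) *\<^sub>R one" for x
    proof -
      have "(L *v x) $ i = (\<Sum>j\<in>UNIV. x $ i - x $ j)" for i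
        unfolding L_def lap_mv[OF ug] Ecomp by (intro sum.cong) auto
      thus ?thesis by (simp add: vec_eq_iff sum_subtractf N_def one_def)
    qed
    obtain i0 :: 'n where True by simp
    have muN: "\<mu> k = N" if "k \<noteq> k0" for k
    proof -
      have "0 = b k \<bullet> b k0" using orth[of k k0] that by simp
      also have "\<dots> = (\<Sum>j\<in>UNIV. b k $ j * b k0 $ i0)" unfolding inner_vec_def inner_real_def
      proof (rule sum.cong[OF refl])
        fix j show "b k $ j * b k0 $ j = b k $ j * b k0 $ i0" using zero_const[OF mu0, of j i0] by simp
      qed
      also have "\<dots> = (\<Sum>j\<in>UNIV. b k $ j) * b k0 $ i0" by (simp add: sum_distrib_right)
      finally have "(\<Sum>j\<in>UNIV. b k $ j) = 0"
        using const_sq[OF mu0, of i0] N2' by auto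
      hence "\<mu> k *\<^sub>R b k = N *\<^sub>R b k" using Lx[of "b k"] eig[of k] by simp
      thus ?thesis using oe.b_nz[of k] by (simp add: scale_cancel_right)
    qed
    have lamN: "lambda2 L = N"
    proof -
      have "xs ! 0 \<in> set xs" using xs_ne by simp
      thus ?thesis unfolding lam setxs using muN by auto
    qed
    have SupEq: "Sup (S \<gamma>) = 2 - 2 / N" if "0 < \<gamma>" "\<gamma> \<le> N" for \<gamma>
    proof (rule antisym)
      show "2 - 2 / N \<le> Sup (S \<gamma>)" using partA[of \<gamma>] that lamN by simp
      show "Sup (S \<gamma>) \<le> 2 - 2 / N"
      proof (rule cSup_least)
        show "S \<gamma> \<noteq> {}" using G0S by auto
        fix x assume "x \<in> S \<gamma>"
        then obtain t where t: "t \<ge> 0" and x: "x = inf_norm (exp (\<gamma> * t) *\<^sub>R (mat_exp (- (t *\<^sub>R L)) - avg_mat))"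
          unfolding S_def by auto
        define e where "e = exp (\<gamma> * t) * exp (- (t * N))"
        have e0: "e \<ge> 0" unfolding e_def by simp
        have "\<gamma> * t \<le> N * t" using that t by (intro mult_right_mono) auto
        hence e1: "e \<le> 1" unfolding e_def by (simp add: exp_add[symmetric] mult.commute)
        have "cc \<gamma> t = (\<lambda>k. e * (1 - ind k))"
          by (auto simp: fun_eq_iff cc_def ind_def e_def muN mu0)
        hence "oe.F (cc \<gamma> t) = e *\<^sub>R (mat 1 - avg_mat)"
          unfolding avgF oe.F_one[symmetric] oe.F_diff oe.F_scale by simp
        hence "x = e * (2 - 2 / N)" unfolding x Mform using inf_norm_Iavg[OF e0 N2] by (simp add: N_def)
        also have "\<dots> \<le> 1 * (2 - 2 / N)" using e1 N2' by (intro mult_right_mono) (auto simp: field_simps)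
        finally show "x \<le> 2 - 2 / N" by simp
      qed
    qed
    have "\<forall>\<gamma>. 0 < \<gamma> \<and> \<gamma> \<le> real CARD('n) \<longrightarrow>
                 Gamma_inf (laplacian E) \<gamma> = 2 - 2 / real CARD('n)"
    proof (intro allI impI)
      fix \<gamma> :: real assume h: "0 < \<gamma> \<and> \<gamma> \<le> real CARD('n)"
      hence "0 < \<gamma>" "\<gamma> \<le> N" by (auto simp: N_def)
      from SupEq[OF this] show "Gamma_inf (laplacian E) \<gamma> = 2 - 2 / real CARD('n)"
        unfolding S_def Gamma_inf_def L_def N_def .
    qed
    moreover have "lambda2 (laplacian E) = real CARD('n)" using lamN unfolding L_def N_def .
    ultimately show ?thesis by (intro conjI)
  qed
  show ?thesis
  proof (intro conjI impI)
    show "\<forall>\<gamma>. 0 < \<gamma> \<and> \<gamma> \<le> lambda2 (laplacian E) \<longrightarrow>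
            bdd_above {inf_norm (exp (\<gamma> * t) *\<^sub>R (mat_exp (- (t *\<^sub>R laplacian E)) - avg_mat)) | t. t \<ge> 0}
          \<and> 2 - 2 / real CARD('n) \<le> Gamma_inf (laplacian E) \<gamma>
          \<and> Gamma_inf (laplacian E) \<gamma> \<le> real CARD('n) - 1" by (rule A)
    assume "complete_graph E"
    from B[OF this] show "lambda2 (laplacian E) = real CARD('n)" by (rule conjunct1)
    from B[OF \<open>complete_graph E\<close>] show "\<forall>\<gamma>. 0 < \<gamma> \<and> \<gamma> \<le> real CARD('n) \<longrightarrow>
                 Gamma_inf (laplacian E) \<gamma> = 2 - 2 / real CARD('n)" by (rule conjunct2)
  qed
qed


end
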